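(* Let $\mathcal L$ be a summable category with finite products strictly preserved by $S$. For objects $X_0,X_1$ put $\psi^0_{X_0,X_1}=SX_0\,\&\,\iota_{0,X_1}\in\mathcal L(SX_0\& X_1,S(X_0\& X_1))$ and $\psi^1_{X_0,X_1}=\iota_{0,X_0}\,\&\,SX_1\in\mathcal L(X_0\& SX_1,S(X_0\& X_1))$. Then, as morphisms $SX_0\& SX_1\to S^2(X_0\& X_1)$ in $\mathcal L$, $$c_{X_0\&X_1}\circ S(\psi^0_{X_0,X_1})\circ\psi^1_{SX_0,X_1}=S(\psi^1_{X_0,X_1})\circ\psi^0_{X_0,SX_1}.$$
   Context: $\mathcal L$ is a category with zero morphisms equipped with a summability structure: a functor $S$ and natural transformations $\pi_0,\pi_1,\sigma:S\Rightarrow\mathrm{Id}$, $\pi_0,\pi_1$ jointly monic, satisfying the axioms of summable categories of Ehrhard's coherent differentiation; $f_0,f_1\in\mathcal L(X,Y)$ are summable if there is (a necessarily unique) $\langle f_0,f_1\rangle\in\mathcal L(X,SY)$ with $\pi_i\circ\langle f_0,f_1\rangle=f_i$, and then $f_0+f_1=\sigma\circ\langle f_0,f_1\rangle$. Homsets are partial commutative monoids for this sum with neutral element $0$ and composition distributes over defined sums. $\iota_0=\langle\mathrm{id},0\rangle:\mathrm{Id}\Rightarrow S$, and the flip $c:S^2\Rightarrow S^2$ is the natural transformation characterised by $\pi_i\circ\pi_j\circ c=\pi_j\circ\pi_i$ ($i,j\in\{0,1\}$). $\mathcal L$ has finite cartesian products $X_0\& X_1$ with projections $p_0,p_1$, and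 $S$ preserves them strictly: $S(X_0\&X_1)=SX_0\& SX_1$ and $S p_i=p_i$. For morphisms $f_i$, $f_0\& f_1$ is the product of morphisms; an object written in place of a morphism denotes its identity. *)

theory Defs
  imports Main
begin

record ('o, 'm) scat =
  hom  :: "'o \<Rightarrow> 'o \<Rightarrow> 'm set"
  comp :: "'m \<Rightarrow> 'm \<Rightarrow> 'm"      (* comp g f = g o f *)
  idm  :: "'o \<Rightarrow> 'm"
  zero :: "'o \<Rightarrow> 'o \<Rightarrow> 'm"
  Sob  :: "'o \<Rightarrow> 'o"
  Smor :: "'m \<Rightarrow> 'm"
  pi0  :: "'o \<Rightarrow> 'm"
  pi1  :: "'o \<Rightarrow> 'm"
  sig  :: "'o \<Rightarrow> 'm"
  prd  :: "'o \<Rightarrow> 'o \<Rightarrow> 'o"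
  pr0  :: "'o \<Rightarrow> 'o \<Rightarrow> 'm"
  pr1  :: "'o \<Rightarrow> 'o \<Rightarrow> 'm"
  term_ob :: "'o"

definition summable :: "('o,'m) scat \<Rightarrow> 'o \<Rightarrow> 'o \<Rightarrow> 'm \<Rightarrow> 'm \<Rightarrow> bool" where
  "summable L X Y f0 f1 \<longleftrightarrow> f0 \<in> hom L X Y \<and> f1 \<in> hom L X Y \<and>
     (\<exists>w \<in> hom L X (Sob L Y). comp L (pi0 L Y) w = f0 \<and> comp L (pi1 L Y) w = f1)"

definition witness :: "('o,'m) scat \<Rightarrow> 'o \<Rightarrow> 'o \<Rightarrow> 'm \<Rightarrow> 'm \<Rightarrow> 'm" where
  "witness L X Y f0 f1 = (THE w. w \<in> hom L X (Sob L Y) \<and>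
      comp L (pi0 L Y) w = f0 \<and> comp L (pi1 L Y) w = f1)"

definition ssum :: "('o,'m) scat \<Rightarrow> 'o \<Rightarrow> 'o \<Rightarrow> 'm \<Rightarrow> 'm \<Rightarrow> 'm" where
  "ssum L X Y f0 f1 = comp L (sig L Y) (witness L X Y f0 f1)"

definition iota0 :: "('o,'m) scat \<Rightarrow> 'o \<Rightarrow> 'm" where
  "iota0 L X = witness L X X (idm L X) (zero L X X)"

definition flip :: "('o,'m) scat \<Rightarrow> 'o \<Rightarrow> 'm" where
  "flip L X = (THE h. h \<in> hom L (Sob L (Sob L X)) (Sob L (Sob L X)) \<and>
     (\<forall>p \<in> {pi0 L, pi1 L}. \<forall>q \<in> {pi0 L, pi1 L}.
        comp L (p X) (comp L (q (Sob L X)) h) = comp L (q X) (p (Sob L X))))"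

definition pairing :: "('o,'m) scat \<Rightarrow> 'o \<Rightarrow> 'o \<Rightarrow> 'o \<Rightarrow> 'm \<Rightarrow> 'm \<Rightarrow> 'm" where
  "pairing L Z X0 X1 f0 f1 = (THE h. h \<in> hom L Z (prd L X0 X1) \<and>
      comp L (pr0 L X0 X1) h = f0 \<and> comp L (pr1 L X0 X1) h = f1)"

definition pmor :: "('o,'m) scat \<Rightarrow> 'o \<Rightarrow> 'o \<Rightarrow> 'o \<Rightarrow> 'o \<Rightarrow> 'm \<Rightarrow> 'm \<Rightarrow> 'm" where
  "pmor L X0 X1 Y0 Y1 f0 f1 = pairing L (prd L X0 X1) Y0 Y1
      (comp L f0 (pr0 L X0 X1)) (comp L f1 (pr1 L X0 X1))"

definition psi0 :: "('o,'m) scat \<Rightarrow> 'o \<Rightarrow> 'o \<Rightarrow> 'm" where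
  "psi0 L X0 X1 = pmor L (Sob L X0) X1 (Sob L X0) (Sob L X1) (idm L (Sob L X0)) (iota0 L X1)"

definition psi1 :: "('o,'m) scat \<Rightarrow> 'o \<Rightarrow> 'o \<Rightarrow> 'm" where
  "psi1 L X0 X1 = pmor L X0 (Sob L X1) (Sob L X0) (Sob L X1) (iota0 L X0) (idm L (Sob L X1))"

locale category =
  fixes L :: "('o,'m) scat"
  assumes comp_hom: "f \<in> hom L X Y \<Longrightarrow> g \<in> hom L Y Z \<Longrightarrow> comp L g f \<in> hom L X Z"
    and comp_assoc: "f \<in> hom L X Y \<Longrightarrow> g \<in> hom L Y Z \<Longrightarrow> h \<in> hom L Z W \<Longrightarrow>
          comp L h (comp L g f) = comp L (comp L h g) f"
    and id_hom: "idm L X \<in> hom L X X"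
    and id_left: "f \<in> hom L X Y \<Longrightarrow> comp L (idm L Y) f = f"
    and id_right: "f \<in> hom L X Y \<Longrightarrow> comp L f (idm L X) = f"
    and hom_disjoint: "f \<in> hom L X Y \<Longrightarrow> f \<in> hom L X' Y' \<Longrightarrow> X = X' \<and> Y = Y'"

locale presummable_category = category +
  assumes zero_hom: "zero L X Y \<in> hom L X Y"
    and zero_left: "f \<in> hom L Y Z \<Longrightarrow> comp L f (zero L X Y) = zero L X Z"
    and zero_right: "g \<in> hom L W X \<Longrightarrow> comp L (zero L X Y) g = zero L W Y"
    and S_hom: "f \<in> hom L X Y \<Longrightarrow> Smor L f \<in> hom L (Sob L X) (Sob L Y)"
    and S_id: "Smor L (idm L X) = idm L (Sob L X)"
    and S_comp: "f \<in> hom L X Y \<Longrightarrow> g \<in> hom L Y Z \<Longrightarrow>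
          Smor L (comp L g f) = comp L (Smor L g) (Smor L f)"
    and pi0_hom: "pi0 L X \<in> hom L (Sob L X) X"
    and pi1_hom: "pi1 L X \<in> hom L (Sob L X) X"
    and sig_hom: "sig L X \<in> hom L (Sob L X) X"
    and pi0_nat: "f \<in> hom L X Y \<Longrightarrow> comp L (pi0 L Y) (Smor L f) = comp L f (pi0 L X)"
    and pi1_nat: "f \<in> hom L X Y \<Longrightarrow> comp L (pi1 L Y) (Smor L f) = comp L f (pi1 L X)"
    and sig_nat: "f \<in> hom L X Y \<Longrightarrow> comp L (sig L Y) (Smor L f) = comp L f (sig L X)"
    and pi_jointly_monic: "f \<in> hom L Z (Sob L X) \<Longrightarrow> g \<in> hom L Z (Sob L X) \<Longrightarrow>
          comp L (pi0 L X) f = comp L (pi0 L X) g \<Longrightarrow> comp L (pi1 L X) f = comp L (pi1 L X) g \<Longrightarrow> f = g"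

locale summable_category = presummable_category +
  assumes S_zero: "f \<in> hom L X Y \<Longrightarrow>
          summable L X Y f (zero L X Y) \<and> ssum L X Y f (zero L X Y) = f"
    and S_com: "summable L X Y f0 f1 \<Longrightarrow>
          summable L X Y f1 f0 \<and> ssum L X Y f0 f1 = ssum L X Y f1 f0"
    and S_assoc: "summable L X Y f0 f1 \<Longrightarrow> summable L X Y (ssum L X Y f0 f1) f2 \<Longrightarrow>
          summable L X Y f1 f2 \<and> summable L X Y f0 (ssum L X Y f1 f2) \<and>
          ssum L X Y (ssum L X Y f0 f1) f2 = ssum L X Y f0 (ssum L X Y f1 f2)"
    and S_witness: "f0 \<in> hom L X (Sob L Y) \<Longrightarrow> f1 \<in> hom L X (Sob L Y) \<Longrightarrow>
          summable L X Y (comp L (pi0 L Y) f0) (comp L (pi0 L Y) f1) \<Longrightarrow>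
          summable L X Y (comp L (pi1 L Y) f0) (comp L (pi1 L Y) f1) \<Longrightarrow>
          summable L X Y (ssum L X Y (comp L (pi0 L Y) f0) (comp L (pi0 L Y) f1))
                         (ssum L X Y (comp L (pi1 L Y) f0) (comp L (pi1 L Y) f1)) \<Longrightarrow>
          summable L X (Sob L Y) f0 f1"

locale summable_category_products = summable_category +
  assumes pr0_hom: "pr0 L X0 X1 \<in> hom L (prd L X0 X1) X0"
    and pr1_hom: "pr1 L X0 X1 \<in> hom L (prd L X0 X1) X1"
    and prod_universal: "f0 \<in> hom L Z X0 \<Longrightarrow> f1 \<in> hom L Z X1 \<Longrightarrow>
          \<exists>!h. h \<in> hom L Z (prd L X0 X1) \<and> comp L (pr0 L X0 X1) h = f0 \<and> comp L (pr1 L X0 X1) h = f1"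
    and terminal: "\<exists>!h. h \<in> hom L Z (term_ob L)"
    and S_prd: "Sob L (prd L X0 X1) = prd L (Sob L X0) (Sob L X1)"
    and S_pr0: "Smor L (pr0 L X0 X1) = pr0 L (Sob L X0) (Sob L X1)"
    and S_pr1: "Smor L (pr1 L X0 X1) = pr1 L (Sob L X0) (Sob L X1)"
    and S_term: "Sob L (term_ob L) = term_ob L"

end

theory Submission
  imports Defs
begin
context summable_category_products
begin

lemma pi_hom: "pi \<in> {pi0 L, pi1 L} \<Longrightarrow> pi X \<in> hom L (Sob L X) X"
  using pi0_hom pi1_hom by auto

lemma pi_nat: "pi \<in> {pi0 L, pi1 L} \<Longrightarrow> f \<in> hom L X Y \<Longrightarrow>
   comp L (pi Y) (Smor L f) = comp L f (pi X)"
  using pi0_nat pi1_nat by auto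

lemma witness_prop:
  assumes "summable L X Y f0 f1"
  shows "witness L X Y f0 f1 \<in> hom L X (Sob L Y) \<and>
    comp L (pi0 L Y) (witness L X Y f0 f1) = f0 \<and> comp L (pi1 L Y) (witness L X Y f0 f1) = f1"
proof -
  from assms obtain w where w: "w \<in> hom L X (Sob L Y)" "comp L (pi0 L Y) w = f0" "comp L (pi1 L Y) w = f1"
    unfolding summable_def by blast
  show ?thesis unfolding witness_def
  proof (rule theI[where a=w])
    show "w \<in> hom L X (Sob L Y) \<and> comp L (pi0 L Y) w = f0 \<and> comp L (pi1 L Y) w = f1" using w by blast
    fix x assume "x \<in> hom L X (Sob L Y) \<and> comp L (pi0 L Y) x = f0 \<and> comp L (pi1 L Y) x = f1"
    then show "x = w" using w pi_jointly_monic[of x X Y w] by auto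
  qed
qed

lemma iota0_prop: "iota0 L X \<in> hom L X (Sob L X) \<and> comp L (pi0 L X) (iota0 L X) = idm L X
   \<and> comp L (pi1 L X) (iota0 L X) = zero L X X"
  unfolding iota0_def using witness_prop[OF conjunct1[OF S_zero[OF id_hom[of X]]]] .

lemma mono2:
  assumes "f \<in> hom L Z (Sob L (Sob L X))" "g \<in> hom L Z (Sob L (Sob L X))"
    "\<And>p q. p \<in> {pi0 L, pi1 L} \<Longrightarrow> q \<in> {pi0 L, pi1 L} \<Longrightarrow>
        comp L (p X) (comp L (q (Sob L X)) f) = comp L (p X) (comp L (q (Sob L X)) g)"
  shows "f = g"
proof -
  have "comp L (q (Sob L X)) f = comp L (q (Sob L X)) g" if q: "q \<in> {pi0 L, pi1 L}" for q
  proof (rule pi_jointly_monic)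
    show "comp L (q (Sob L X)) f \<in> hom L Z (Sob L X)" using comp_hom[OF assms(1) pi_hom[OF q]] .
    show "comp L (q (Sob L X)) g \<in> hom L Z (Sob L X)" using comp_hom[OF assms(2) pi_hom[OF q]] .
    show "comp L (pi0 L X) (comp L (q (Sob L X)) f) = comp L (pi0 L X) (comp L (q (Sob L X)) g)"
      using assms(3)[of "pi0 L" q] q by blast
    show "comp L (pi1 L X) (comp L (q (Sob L X)) f) = comp L (pi1 L X) (comp L (q (Sob L X)) g)"
      using assms(3)[of "pi1 L" q] q by blast
  qed
  then have "comp L (pi0 L (Sob L X)) f = comp L (pi0 L (Sob L X)) g"
     "comp L (pi1 L (Sob L X)) f = comp L (pi1 L (Sob L X)) g" by auto
  then show ?thesis using pi_jointly_monic[OF assms(1,2)] by blast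
qed

lemma flip_exists: "\<exists>h. h \<in> hom L (Sob L (Sob L X)) (Sob L (Sob L X)) \<and>
     (\<forall>p \<in> {pi0 L, pi1 L}. \<forall>q \<in> {pi0 L, pi1 L}.
        comp L (p X) (comp L (q (Sob L X)) h) = comp L (q X) (p (Sob L X)))"
proof -
  let ?A = "Sob L (Sob L X)"
  have h0: "Smor L (pi0 L X) \<in> hom L ?A (Sob L X)" using S_hom[OF pi0_hom] .
  have h1: "Smor L (pi1 L X) \<in> hom L ?A (Sob L X)" using S_hom[OF pi1_hom] .
  have p0: "pi0 L (Sob L X) \<in> hom L ?A (Sob L X)" by (rule pi0_hom)
  have p1: "pi1 L (Sob L X) \<in> hom L ?A (Sob L X)" by (rule pi1_hom)
  have sa: "summable L ?A X (comp L (pi0 L X) (Smor L (pi0 L X))) (comp L (pi0 L X) (Smor L (pi1 L X)))"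
    unfolding summable_def pi0_nat[OF pi0_hom] pi0_nat[OF pi1_hom]
    using comp_hom[OF p0 pi0_hom] comp_hom[OF p0 pi1_hom] p0 by blast
  have sb: "summable L ?A X (comp L (pi1 L X) (Smor L (pi0 L X))) (comp L (pi1 L X) (Smor L (pi1 L X)))"
    unfolding summable_def pi1_nat[OF pi0_hom] pi1_nat[OF pi1_hom]
    using comp_hom[OF p1 pi0_hom] comp_hom[OF p1 pi1_hom] p1 by blast
  have ea: "ssum L ?A X (comp L (pi0 L X) (Smor L (pi0 L X))) (comp L (pi0 L X) (Smor L (pi1 L X)))
      = comp L (sig L X) (pi0 L (Sob L X))"
  proof -
    have "witness L ?A X (comp L (pi0 L X) (Smor L (pi0 L X))) (comp L (pi0 L X) (Smor L (pi1 L X)))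
       = pi0 L (Sob L X)"
      apply (rule pi_jointly_monic)
      using witness_prop[OF sa] apply blast
      apply (rule p0)
      using witness_prop[OF sa] pi0_nat[OF pi0_hom] apply simp
      using witness_prop[OF sa] pi0_nat[OF pi1_hom] apply simp done
    then show ?thesis unfolding ssum_def by simp
  qed
  have eb: "ssum L ?A X (comp L (pi1 L X) (Smor L (pi0 L X))) (comp L (pi1 L X) (Smor L (pi1 L X)))
      = comp L (sig L X) (pi1 L (Sob L X))"
  proof -
    have "witness L ?A X (comp L (pi1 L X) (Smor L (pi0 L X))) (comp L (pi1 L X) (Smor L (pi1 L X)))
       = pi1 L (Sob L X)"
      apply (rule pi_jointly_monic)
      using witness_prop[OF sb] apply blast
      apply (rule p1)
      using witness_prop[OF sb] pi1_nat[OF pi0_hom] apply simp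
      using witness_prop[OF sb] pi1_nat[OF pi1_hom] apply simp done
    then show ?thesis unfolding ssum_def by simp
  qed
  have sc: "summable L ?A X (comp L (sig L X) (pi0 L (Sob L X))) (comp L (sig L X) (pi1 L (Sob L X)))"
    unfolding summable_def
  proof (intro conjI bexI)
    show "comp L (sig L X) (pi0 L (Sob L X)) \<in> hom L ?A X" using comp_hom[OF p0 sig_hom] .
    show "comp L (sig L X) (pi1 L (Sob L X)) \<in> hom L ?A X" using comp_hom[OF p1 sig_hom] .
    show "Smor L (sig L X) \<in> hom L ?A (Sob L X)" using S_hom[OF sig_hom] .
    show "comp L (pi0 L X) (Smor L (sig L X)) = comp L (sig L X) (pi0 L (Sob L X))"
      using pi0_nat[OF sig_hom] .
    show "comp L (pi1 L X) (Smor L (sig L X)) = comp L (sig L X) (pi1 L (Sob L X))"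
      using pi1_nat[OF sig_hom] .
  qed
  have s: "summable L ?A (Sob L X) (Smor L (pi0 L X)) (Smor L (pi1 L X))"
    using S_witness[OF h0 h1 sa sb] sc unfolding ea eb by blast
  define w where "w = witness L ?A (Sob L X) (Smor L (pi0 L X)) (Smor L (pi1 L X))"
  have w: "w \<in> hom L ?A ?A" "comp L (pi0 L (Sob L X)) w = Smor L (pi0 L X)"
      "comp L (pi1 L (Sob L X)) w = Smor L (pi1 L X)"
    using witness_prop[OF s] unfolding w_def by auto
  have "\<forall>p \<in> {pi0 L, pi1 L}. \<forall>q \<in> {pi0 L, pi1 L}.
        comp L (p X) (comp L (q (Sob L X)) w) = comp L (q X) (p (Sob L X))"
    using w pi_nat[OF _ pi0_hom] pi_nat[OF _ pi1_hom] by auto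
  then show ?thesis using w by blast
qed

lemma flip_prop: "flip L X \<in> hom L (Sob L (Sob L X)) (Sob L (Sob L X)) \<and>
     (\<forall>p \<in> {pi0 L, pi1 L}. \<forall>q \<in> {pi0 L, pi1 L}.
        comp L (p X) (comp L (q (Sob L X)) (flip L X)) = comp L (q X) (p (Sob L X)))"
proof -
  obtain h where h: "h \<in> hom L (Sob L (Sob L X)) (Sob L (Sob L X)) \<and>
     (\<forall>p \<in> {pi0 L, pi1 L}. \<forall>q \<in> {pi0 L, pi1 L}.
        comp L (p X) (comp L (q (Sob L X)) h) = comp L (q X) (p (Sob L X)))"
    using flip_exists by blast
  show ?thesis unfolding flip_def
  proof (rule theI[where a=h])
    fix x assume x: "x \<in> hom L (Sob L (Sob L X)) (Sob L (Sob L X)) \<and>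
     (\<forall>p \<in> {pi0 L, pi1 L}. \<forall>q \<in> {pi0 L, pi1 L}.
        comp L (p X) (comp L (q (Sob L X)) x) = comp L (q X) (p (Sob L X)))"
    show "x = h" apply (rule mono2) using x h by auto
  qed (use h in blast)
qed

lemma pairing_prop:
  assumes "f0 \<in> hom L Z X0" "f1 \<in> hom L Z X1"
  shows "pairing L Z X0 X1 f0 f1 \<in> hom L Z (prd L X0 X1) \<and>
    comp L (pr0 L X0 X1) (pairing L Z X0 X1 f0 f1) = f0 \<and> comp L (pr1 L X0 X1) (pairing L Z X0 X1 f0 f1) = f1"
  unfolding pairing_def using theI'[OF prod_universal[OF assms]] .

lemma prod_ext:
  assumes "h \<in> hom L Z (prd L X0 X1)" "h' \<in> hom L Z (prd L X0 X1)"
    "comp L (pr0 L X0 X1) h = comp L (pr0 L X0 X1) h'" "comp L (pr1 L X0 X1) h = comp L (pr1 L X0 X1) h'"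
  shows "h = h'"
proof -
  have a: "comp L (pr0 L X0 X1) h \<in> hom L Z X0" using comp_hom[OF assms(1) pr0_hom] .
  have b: "comp L (pr1 L X0 X1) h \<in> hom L Z X1" using comp_hom[OF assms(1) pr1_hom] .
  from prod_universal[OF a b] obtain k where k: "\<And>y. y \<in> hom L Z (prd L X0 X1) \<and> comp L (pr0 L X0 X1) y = comp L (pr0 L X0 X1) h \<and> comp L (pr1 L X0 X1) y = comp L (pr1 L X0 X1) h \<Longrightarrow> y = k" by blast
  show ?thesis using k[of h] k[of h'] assms by argo
qed

lemma flip_pr0:
  "comp L (pr0 L (Sob L (Sob L X0)) (Sob L (Sob L X1))) (flip L (prd L X0 X1))
   = comp L (flip L X0) (pr0 L (Sob L (Sob L X0)) (Sob L (Sob L X1)))"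
proof -
  define Z where "Z = prd L (Sob L (Sob L X0)) (Sob L (Sob L X1))"
  define SP where "SP = prd L (Sob L X0) (Sob L X1)"
  define P where "P = prd L X0 X1"
  define c where "c = flip L P"
  define cX where "cX = flip L X0"
  define a2 where "a2 = pr0 L (Sob L (Sob L X0)) (Sob L (Sob L X1))"
  define a1 where "a1 = pr0 L (Sob L X0) (Sob L X1)"
  define a where "a = pr0 L X0 X1"
  have SP: "Sob L P = SP" unfolding P_def SP_def by (rule S_prd)
  have SSP: "Sob L SP = Z" unfolding Z_def SP_def by (rule S_prd)
  have Sa: "Smor L a = a1" unfolding a_def a1_def by (rule S_pr0)
  have Sa1: "Smor L a1 = a2" unfolding a2_def a1_def by (rule S_pr0)
  have fl: "c \<in> hom L Z Z \<and> (\<forall>p \<in> {pi0 L, pi1 L}. \<forall>q \<in> {pi0 L, pi1 L}.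
        comp L (p P) (comp L (q SP) c) = comp L (q P) (p SP))"
    using flip_prop[of P] unfolding c_def SP SSP .
  have flX: "cX \<in> hom L (Sob L (Sob L X0)) (Sob L (Sob L X0)) \<and> (\<forall>p \<in> {pi0 L, pi1 L}. \<forall>q \<in> {pi0 L, pi1 L}.
        comp L (p X0) (comp L (q (Sob L X0)) cX) = comp L (q X0) (p (Sob L X0)))"
    using flip_prop[of X0] unfolding cX_def .
  have hc: "c \<in> hom L Z Z" using fl by blast
  have hcX: "cX \<in> hom L (Sob L (Sob L X0)) (Sob L (Sob L X0))" using flX by blast
  have ha2: "a2 \<in> hom L Z (Sob L (Sob L X0))" unfolding a2_def Z_def by (rule pr0_hom)
  have ha1: "a1 \<in> hom L SP (Sob L X0)" unfolding a1_def SP_def by (rule pr0_hom)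
  have ha: "a \<in> hom L P X0" unfolding a_def P_def by (rule pr0_hom)
  have "comp L a2 c = comp L cX a2"
  proof (rule mono2[where X=X0 and Z=Z])
    show "comp L a2 c \<in> hom L Z (Sob L (Sob L X0))" using comp_hom[OF hc ha2] .
    show "comp L cX a2 \<in> hom L Z (Sob L (Sob L X0))" using comp_hom[OF ha2 hcX] .
    fix p q assume p: "p \<in> {pi0 L, pi1 L}" and q: "q \<in> {pi0 L, pi1 L}"
    have hqSP: "q SP \<in> hom L Z SP" using pi_hom[OF q, of SP] unfolding SSP .
    have hpSP: "p SP \<in> hom L Z SP" using pi_hom[OF p, of SP] unfolding SSP .
    have hqP: "q P \<in> hom L SP P" using pi_hom[OF q, of P] unfolding SP .
    have hpP: "p P \<in> hom L SP P" using pi_hom[OF p, of P] unfolding SP .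
    have hqS0: "q (Sob L X0) \<in> hom L (Sob L (Sob L X0)) (Sob L X0)" using pi_hom[OF q] .
    have hpS0: "p (Sob L X0) \<in> hom L (Sob L (Sob L X0)) (Sob L X0)" using pi_hom[OF p] .
    have hqX0: "q X0 \<in> hom L (Sob L X0) X0" using pi_hom[OF q] .
    have hpX0: "p X0 \<in> hom L (Sob L X0) X0" using pi_hom[OF p] .
    have nq1: "comp L (q (Sob L X0)) a2 = comp L a1 (q SP)"
      using pi_nat[OF q ha1] unfolding Sa1 SP .
    have np1: "comp L (p (Sob L X0)) a2 = comp L a1 (p SP)"
      using pi_nat[OF p ha1] unfolding Sa1 SP .
    have nq: "comp L (q X0) a1 = comp L a (q P)"
      using pi_nat[OF q ha] unfolding Sa SP .
    have np: "comp L (p X0) a1 = comp L a (p P)"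
      using pi_nat[OF p ha] unfolding Sa SP .
    have "comp L (p X0) (comp L (q (Sob L X0)) (comp L a2 c))
        = comp L (p X0) (comp L (comp L (q (Sob L X0)) a2) c)"
      by (simp only: comp_assoc[OF hc ha2 hqS0])
    also have "\<dots> = comp L (p X0) (comp L (comp L a1 (q SP)) c)" by (simp only: nq1)
    also have "\<dots> = comp L (p X0) (comp L a1 (comp L (q SP) c))"
      by (simp only: comp_assoc[OF hc hqSP ha1])
    also have "\<dots> = comp L (comp L (p X0) a1) (comp L (q SP) c)"
      by (simp only: comp_assoc[OF comp_hom[OF hc hqSP] ha1 hpX0])
    also have "\<dots> = comp L (comp L a (p P)) (comp L (q SP) c)" by (simp only: np)
    also have "\<dots> = comp L a (comp L (p P) (comp L (q SP) c))"
      by (simp only: comp_assoc[OF comp_hom[OF hc hqSP] hpP ha])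
    also have "\<dots> = comp L a (comp L (q P) (p SP))" by (simp only: bspec[OF bspec[OF conjunct2[OF fl] p] q])
    also have "\<dots> = comp L (comp L a (q P)) (p SP)"
      by (simp only: comp_assoc[OF hpSP hqP ha])
    also have "\<dots> = comp L (comp L (q X0) a1) (p SP)" by (simp only: nq)
    also have "\<dots> = comp L (q X0) (comp L a1 (p SP))"
      by (simp only: comp_assoc[OF hpSP ha1 hqX0])
    also have "\<dots> = comp L (q X0) (comp L (p (Sob L X0)) a2)" by (simp only: np1)
    also have "\<dots> = comp L (comp L (q X0) (p (Sob L X0))) a2"
      by (simp only: comp_assoc[OF ha2 hpS0 hqX0])
    also have "\<dots> = comp L (comp L (p X0) (comp L (q (Sob L X0)) cX)) a2" by (simp only: bspec[OF bspec[OF conjunct2[OF flX] p] q])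
    also have "\<dots> = comp L (comp L (comp L (p X0) (q (Sob L X0))) cX) a2"
      by (simp only: comp_assoc[OF hcX hqS0 hpX0])
    also have "\<dots> = comp L (comp L (p X0) (q (Sob L X0))) (comp L cX a2)"
      by (simp only: comp_assoc[OF ha2 hcX comp_hom[OF hqS0 hpX0]])
    also have "\<dots> = comp L (p X0) (comp L (q (Sob L X0)) (comp L cX a2))"
      by (simp only: comp_assoc[OF comp_hom[OF ha2 hcX] hqS0 hpX0])
    finally show "comp L (p X0) (comp L (q (Sob L X0)) (comp L a2 c))
        = comp L (p X0) (comp L (q (Sob L X0)) (comp L cX a2))" .
  qed
  then show ?thesis unfolding a2_def c_def cX_def P_def .
qed

lemma flip_pr1:
  "comp L (pr1 L (Sob L (Sob L X0)) (Sob L (Sob L X1))) (flip L (prd L X0 X1))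
   = comp L (flip L X1) (pr1 L (Sob L (Sob L X0)) (Sob L (Sob L X1)))"
proof -
  define Z where "Z = prd L (Sob L (Sob L X0)) (Sob L (Sob L X1))"
  define SP where "SP = prd L (Sob L X0) (Sob L X1)"
  define P where "P = prd L X0 X1"
  define c where "c = flip L P"
  define cX where "cX = flip L X1"
  define a2 where "a2 = pr1 L (Sob L (Sob L X0)) (Sob L (Sob L X1))"
  define a1 where "a1 = pr1 L (Sob L X0) (Sob L X1)"
  define a where "a = pr1 L X0 X1"
  have SP: "Sob L P = SP" unfolding P_def SP_def by (rule S_prd)
  have SSP: "Sob L SP = Z" unfolding Z_def SP_def by (rule S_prd)
  have Sa: "Smor L a = a1" unfolding a_def a1_def by (rule S_pr1)
  have Sa1: "Smor L a1 = a2" unfolding a2_def a1_def by (rule S_pr1)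
  have fl: "c \<in> hom L Z Z \<and> (\<forall>p \<in> {pi0 L, pi1 L}. \<forall>q \<in> {pi0 L, pi1 L}.
        comp L (p P) (comp L (q SP) c) = comp L (q P) (p SP))"
    using flip_prop[of P] unfolding c_def SP SSP .
  have flX: "cX \<in> hom L (Sob L (Sob L X1)) (Sob L (Sob L X1)) \<and> (\<forall>p \<in> {pi0 L, pi1 L}. \<forall>q \<in> {pi0 L, pi1 L}.
        comp L (p X1) (comp L (q (Sob L X1)) cX) = comp L (q X1) (p (Sob L X1)))"
    using flip_prop[of X1] unfolding cX_def .
  have hc: "c \<in> hom L Z Z" using fl by blast
  have hcX: "cX \<in> hom L (Sob L (Sob L X1)) (Sob L (Sob L X1))" using flX by blast
  have ha2: "a2 \<in> hom L Z (Sob L (Sob L X1))" unfolding a2_def Z_def by (rule pr1_hom)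
  have ha1: "a1 \<in> hom L SP (Sob L X1)" unfolding a1_def SP_def by (rule pr1_hom)
  have ha: "a \<in> hom L P X1" unfolding a_def P_def by (rule pr1_hom)
  have "comp L a2 c = comp L cX a2"
  proof (rule mono2[where X=X1 and Z=Z])
    show "comp L a2 c \<in> hom L Z (Sob L (Sob L X1))" using comp_hom[OF hc ha2] .
    show "comp L cX a2 \<in> hom L Z (Sob L (Sob L X1))" using comp_hom[OF ha2 hcX] .
    fix p q assume p: "p \<in> {pi0 L, pi1 L}" and q: "q \<in> {pi0 L, pi1 L}"
    have hqSP: "q SP \<in> hom L Z SP" using pi_hom[OF q, of SP] unfolding SSP .
    have hpSP: "p SP \<in> hom L Z SP" using pi_hom[OF p, of SP] unfolding SSP .
    have hqP: "q P \<in> hom L SP P" using pi_hom[OF q, of P] unfolding SP .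
    have hpP: "p P \<in> hom L SP P" using pi_hom[OF p, of P] unfolding SP .
    have hqS0: "q (Sob L X1) \<in> hom L (Sob L (Sob L X1)) (Sob L X1)" using pi_hom[OF q] .
    have hpS0: "p (Sob L X1) \<in> hom L (Sob L (Sob L X1)) (Sob L X1)" using pi_hom[OF p] .
    have hqX1: "q X1 \<in> hom L (Sob L X1) X1" using pi_hom[OF q] .
    have hpX1: "p X1 \<in> hom L (Sob L X1) X1" using pi_hom[OF p] .
    have nq1: "comp L (q (Sob L X1)) a2 = comp L a1 (q SP)"
      using pi_nat[OF q ha1] unfolding Sa1 SP .
    have np1: "comp L (p (Sob L X1)) a2 = comp L a1 (p SP)"
      using pi_nat[OF p ha1] unfolding Sa1 SP .
    have nq: "comp L (q X1) a1 = comp L a (q P)"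
      using pi_nat[OF q ha] unfolding Sa SP .
    have np: "comp L (p X1) a1 = comp L a (p P)"
      using pi_nat[OF p ha] unfolding Sa SP .
    have "comp L (p X1) (comp L (q (Sob L X1)) (comp L a2 c))
        = comp L (p X1) (comp L (comp L (q (Sob L X1)) a2) c)"
      by (simp only: comp_assoc[OF hc ha2 hqS0])
    also have "\<dots> = comp L (p X1) (comp L (comp L a1 (q SP)) c)" by (simp only: nq1)
    also have "\<dots> = comp L (p X1) (comp L a1 (comp L (q SP) c))"
      by (simp only: comp_assoc[OF hc hqSP ha1])
    also have "\<dots> = comp L (comp L (p X1) a1) (comp L (q SP) c)"
      by (simp only: comp_assoc[OF comp_hom[OF hc hqSP] ha1 hpX1])
    also have "\<dots> = comp L (comp L a (p P)) (comp L (q SP) c)" by (simp only: np)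
    also have "\<dots> = comp L a (comp L (p P) (comp L (q SP) c))"
      by (simp only: comp_assoc[OF comp_hom[OF hc hqSP] hpP ha])
    also have "\<dots> = comp L a (comp L (q P) (p SP))" by (simp only: bspec[OF bspec[OF conjunct2[OF fl] p] q])
    also have "\<dots> = comp L (comp L a (q P)) (p SP)"
      by (simp only: comp_assoc[OF hpSP hqP ha])
    also have "\<dots> = comp L (comp L (q X1) a1) (p SP)" by (simp only: nq)
    also have "\<dots> = comp L (q X1) (comp L a1 (p SP))"
      by (simp only: comp_assoc[OF hpSP ha1 hqX1])
    also have "\<dots> = comp L (q X1) (comp L (p (Sob L X1)) a2)" by (simp only: np1)
    also have "\<dots> = comp L (comp L (q X1) (p (Sob L X1))) a2"
      by (simp only: comp_assoc[OF ha2 hpS0 hqX1])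
    also have "\<dots> = comp L (comp L (p X1) (comp L (q (Sob L X1)) cX)) a2" by (simp only: bspec[OF bspec[OF conjunct2[OF flX] p] q])
    also have "\<dots> = comp L (comp L (comp L (p X1) (q (Sob L X1))) cX) a2"
      by (simp only: comp_assoc[OF hcX hqS0 hpX1])
    also have "\<dots> = comp L (comp L (p X1) (q (Sob L X1))) (comp L cX a2)"
      by (simp only: comp_assoc[OF ha2 hcX comp_hom[OF hqS0 hpX1]])
    also have "\<dots> = comp L (p X1) (comp L (q (Sob L X1)) (comp L cX a2))"
      by (simp only: comp_assoc[OF comp_hom[OF ha2 hcX] hqS0 hpX1])
    finally show "comp L (p X1) (comp L (q (Sob L X1)) (comp L a2 c))
        = comp L (p X1) (comp L (q (Sob L X1)) (comp L cX a2))" .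
  qed
  then show ?thesis unfolding a2_def c_def cX_def P_def .
qed

lemma pmor_prop:
  assumes "f0 \<in> hom L X0 Y0" "f1 \<in> hom L X1 Y1"
  shows "pmor L X0 X1 Y0 Y1 f0 f1 \<in> hom L (prd L X0 X1) (prd L Y0 Y1) \<and>
    comp L (pr0 L Y0 Y1) (pmor L X0 X1 Y0 Y1 f0 f1) = comp L f0 (pr0 L X0 X1) \<and>
    comp L (pr1 L Y0 Y1) (pmor L X0 X1 Y0 Y1 f0 f1) = comp L f1 (pr1 L X0 X1)"
  unfolding pmor_def
  by (rule pairing_prop[OF comp_hom[OF pr0_hom assms(1)] comp_hom[OF pr1_hom assms(2)]])

lemma pi_iota:
  assumes p: "p \<in> {pi0 L, pi1 L}" and g: "g \<in> hom L Y X"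
  shows "comp L g (comp L (p Y) (iota0 L Y)) = comp L (comp L (p X) (iota0 L X)) g"
proof (cases "p = pi0 L")
  case True
  then show ?thesis using iota0_prop id_left[OF g] id_right[OF g] by simp
next
  case False
  then have "p = pi1 L" using p by blast
  then show ?thesis using iota0_prop zero_left[OF g] zero_right[OF g] by simp
qed

lemma flip_iota: "comp L (flip L X) (iota0 L (Sob L X)) = Smor L (iota0 L X)"
proof -
  define c where "c = flip L X"
  define i where "i = iota0 L (Sob L X)"
  define j where "j = iota0 L X"
  have hc: "c \<in> hom L (Sob L (Sob L X)) (Sob L (Sob L X))" using flip_prop unfolding c_def by blast
  have hi: "i \<in> hom L (Sob L X) (Sob L (Sob L X))" using iota0_prop unfolding i_def by blast
  have hj: "j \<in> hom L X (Sob L X)" using iota0_prop unfolding j_def by blast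
  have "comp L c i = Smor L j"
  proof (rule mono2[where X=X and Z="Sob L X"])
    show "comp L c i \<in> hom L (Sob L X) (Sob L (Sob L X))" using comp_hom[OF hi hc] .
    show "Smor L j \<in> hom L (Sob L X) (Sob L (Sob L X))" using S_hom[OF hj] .
    fix p q assume p: "p \<in> {pi0 L, pi1 L}" and q: "q \<in> {pi0 L, pi1 L}"
    have hqSX: "q (Sob L X) \<in> hom L (Sob L (Sob L X)) (Sob L X)" using pi_hom[OF q] .
    have hpSX: "p (Sob L X) \<in> hom L (Sob L (Sob L X)) (Sob L X)" using pi_hom[OF p] .
    have hqX: "q X \<in> hom L (Sob L X) X" using pi_hom[OF q] .
    have hpX: "p X \<in> hom L (Sob L X) X" using pi_hom[OF p] .
    have fl: "comp L (p X) (comp L (q (Sob L X)) c) = comp L (q X) (p (Sob L X))"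
      unfolding c_def using bspec[OF bspec[OF conjunct2[OF flip_prop] p] q] .
    have "comp L (p X) (comp L (q (Sob L X)) (comp L c i))
        = comp L (p X) (comp L (comp L (q (Sob L X)) c) i)"
      by (simp only: comp_assoc[OF hi hc hqSX])
    also have "\<dots> = comp L (comp L (p X) (comp L (q (Sob L X)) c)) i"
      by (simp only: comp_assoc[OF hi comp_hom[OF hc hqSX] hpX])
    also have "\<dots> = comp L (comp L (q X) (p (Sob L X))) i" by (simp only: fl)
    also have "\<dots> = comp L (q X) (comp L (p (Sob L X)) i)"
      by (simp only: comp_assoc[OF hi hpSX hqX])
    also have "\<dots> = comp L (comp L (p X) j) (q X)"
      unfolding i_def j_def by (rule pi_iota[OF p hqX])
    also have "\<dots> = comp L (p X) (comp L j (q X))"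
      by (simp only: comp_assoc[OF hqX hj hpX])
    also have "\<dots> = comp L (p X) (comp L (q (Sob L X)) (Smor L j))"
      by (simp only: pi_nat[OF q hj])
    finally show "comp L (p X) (comp L (q (Sob L X)) (comp L c i))
        = comp L (p X) (comp L (q (Sob L X)) (Smor L j))" .
  qed
  then show ?thesis unfolding c_def i_def j_def .
qed

lemma flip_Siota: "comp L (flip L X) (Smor L (iota0 L X)) = iota0 L (Sob L X)"
proof -
  define c where "c = flip L X"
  define i where "i = iota0 L (Sob L X)"
  define j where "j = iota0 L X"
  have hc: "c \<in> hom L (Sob L (Sob L X)) (Sob L (Sob L X))" using flip_prop unfolding c_def by blast
  have hi: "i \<in> hom L (Sob L X) (Sob L (Sob L X))" using iota0_prop unfolding i_def by blast
  have hj: "j \<in> hom L X (Sob L X)" using iota0_prop unfolding j_def by blast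
  have hSj: "Smor L j \<in> hom L (Sob L X) (Sob L (Sob L X))" using S_hom[OF hj] .
  have "comp L c (Smor L j) = i"
  proof (rule mono2[where X=X and Z="Sob L X"])
    show "comp L c (Smor L j) \<in> hom L (Sob L X) (Sob L (Sob L X))" using comp_hom[OF hSj hc] .
    show "i \<in> hom L (Sob L X) (Sob L (Sob L X))" using hi .
    fix p q assume p: "p \<in> {pi0 L, pi1 L}" and q: "q \<in> {pi0 L, pi1 L}"
    have hqSX: "q (Sob L X) \<in> hom L (Sob L (Sob L X)) (Sob L X)" using pi_hom[OF q] .
    have hpSX: "p (Sob L X) \<in> hom L (Sob L (Sob L X)) (Sob L X)" using pi_hom[OF p] .
    have hqX: "q X \<in> hom L (Sob L X) X" using pi_hom[OF q] .
    have hpX: "p X \<in> hom L (Sob L X) X" using pi_hom[OF p] .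
    have fl: "comp L (p X) (comp L (q (Sob L X)) c) = comp L (q X) (p (Sob L X))"
      unfolding c_def using bspec[OF bspec[OF conjunct2[OF flip_prop] p] q] .
    have "comp L (p X) (comp L (q (Sob L X)) (comp L c (Smor L j)))
        = comp L (p X) (comp L (comp L (q (Sob L X)) c) (Smor L j))"
      by (simp only: comp_assoc[OF hSj hc hqSX])
    also have "\<dots> = comp L (comp L (p X) (comp L (q (Sob L X)) c)) (Smor L j)"
      by (simp only: comp_assoc[OF hSj comp_hom[OF hc hqSX] hpX])
    also have "\<dots> = comp L (comp L (q X) (p (Sob L X))) (Smor L j)" by (simp only: fl)
    also have "\<dots> = comp L (q X) (comp L (p (Sob L X)) (Smor L j))"
      by (simp only: comp_assoc[OF hSj hpSX hqX])
    also have "\<dots> = comp L (q X) (comp L j (p X))"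
      by (simp only: pi_nat[OF p hj])
    also have "\<dots> = comp L (comp L (q X) j) (p X)"
      by (simp only: comp_assoc[OF hpX hj hqX])
    also have "\<dots> = comp L (p X) (comp L (q (Sob L X)) i)"
      unfolding i_def j_def by (rule pi_iota[OF q hpX, symmetric])
    finally show "comp L (p X) (comp L (q (Sob L X)) (comp L c (Smor L j)))
        = comp L (p X) (comp L (q (Sob L X)) i)" .
  qed
  then show ?thesis unfolding c_def i_def j_def .
qed
end

theorem mainTheorem3:
  assumes "summable_category_products L"
  shows "comp L (flip L (prd L X0 X1))
           (comp L (Smor L (psi0 L X0 X1)) (psi1 L (Sob L X0) X1))
         = comp L (Smor L (psi1 L X0 X1)) (psi0 L X0 (Sob L X1))"
proof -
  interpret summable_category_products L by (rule assms)
  define A0 where "A0 = Sob L X0"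
  define A1 where "A1 = Sob L X1"
  define B0 where "B0 = Sob L A0"
  define B1 where "B1 = Sob L A1"
  define P where "P = prd L X0 X1"
  define D where "D = prd L A0 A1"
  define Z where "Z = prd L B0 B1"
  define c where "c = flip L P"
  define u where "u = psi1 L A0 X1"
  define v where "v = psi0 L X0 X1"
  define u' where "u' = psi1 L X0 X1"
  define v' where "v' = psi0 L X0 A1"
  define i0 where "i0 = iota0 L X0"
  define i1 where "i1 = iota0 L X1"
  define j0 where "j0 = iota0 L A0"
  define j1 where "j1 = iota0 L A1"
  have hi0: "i0 \<in> hom L X0 A0" using iota0_prop unfolding i0_def A0_def by blast
  have hi1: "i1 \<in> hom L X1 A1" using iota0_prop unfolding i1_def A1_def by blast
  have hj0: "j0 \<in> hom L A0 B0" using iota0_prop unfolding j0_def B0_def by blast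
  have hj1: "j1 \<in> hom L A1 B1" using iota0_prop unfolding j1_def B1_def by blast
  have hSi0: "Smor L i0 \<in> hom L A0 B0" using S_hom[OF hi0] unfolding A0_def B0_def .
  have hSi1: "Smor L i1 \<in> hom L A1 B1" using S_hom[OF hi1] unfolding A1_def B1_def .
  have SP: "Sob L P = D" unfolding P_def D_def A0_def A1_def by (rule S_prd)
  have SD: "Sob L D = Z" unfolding Z_def D_def B0_def B1_def by (rule S_prd)
  have hc: "c \<in> hom L Z Z" using conjunct1[OF flip_prop[of P]] unfolding c_def SP SD .
  have pu: "u \<in> hom L D (prd L B0 A1) \<and> comp L (pr0 L B0 A1) u = comp L j0 (pr0 L A0 A1)
     \<and> comp L (pr1 L B0 A1) u = comp L (idm L A1) (pr1 L A0 A1)"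
    unfolding u_def psi1_def D_def B0_def A1_def j0_def
    by (rule pmor_prop[OF iota0_prop[THEN conjunct1] id_hom])
  have pv: "v \<in> hom L (prd L A0 X1) D \<and> comp L (pr0 L A0 A1) v = comp L (idm L A0) (pr0 L A0 X1)
     \<and> comp L (pr1 L A0 A1) v = comp L i1 (pr1 L A0 X1)"
    unfolding v_def psi0_def D_def A0_def A1_def i1_def
    by (rule pmor_prop[OF id_hom iota0_prop[THEN conjunct1]])
  have pu': "u' \<in> hom L (prd L X0 A1) D \<and> comp L (pr0 L A0 A1) u' = comp L i0 (pr0 L X0 A1)
     \<and> comp L (pr1 L A0 A1) u' = comp L (idm L A1) (pr1 L X0 A1)"
    unfolding u'_def psi1_def D_def A0_def A1_def i0_def
    by (rule pmor_prop[OF iota0_prop[THEN conjunct1] id_hom])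
  have pv': "v' \<in> hom L D (prd L A0 B1) \<and> comp L (pr0 L A0 B1) v' = comp L (idm L A0) (pr0 L A0 A1)
     \<and> comp L (pr1 L A0 B1) v' = comp L j1 (pr1 L A0 A1)"
    unfolding v'_def psi0_def D_def A0_def A1_def B1_def j1_def
    by (rule pmor_prop[OF id_hom iota0_prop[THEN conjunct1]])
  have hu: "u \<in> hom L D (prd L B0 A1)" using pu by blast
  have hv: "v \<in> hom L (prd L A0 X1) D" using pv by blast
  have hu': "u' \<in> hom L (prd L X0 A1) D" using pu' by blast
  have hv': "v' \<in> hom L D (prd L A0 B1)" using pv' by blast
  have SSA0X1: "Sob L (prd L A0 X1) = prd L B0 A1" unfolding B0_def A1_def by (rule S_prd)
  have SSX0A1: "Sob L (prd L X0 A1) = prd L A0 B1" unfolding A0_def B1_def by (rule S_prd)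
  have hSv: "Smor L v \<in> hom L (prd L B0 A1) Z" using S_hom[OF hv] unfolding SSA0X1 SD .
  have hSu': "Smor L u' \<in> hom L (prd L A0 B1) Z" using S_hom[OF hu'] unfolding SSX0A1 SD .
  have hp0: "pr0 L B0 B1 \<in> hom L Z B0" unfolding Z_def by (rule pr0_hom)
  have hp1: "pr1 L B0 B1 \<in> hom L Z B1" unfolding Z_def by (rule pr1_hom)
  have hq0: "pr0 L A0 A1 \<in> hom L D A0" unfolding D_def by (rule pr0_hom)
  have hq1: "pr1 L A0 A1 \<in> hom L D A1" unfolding D_def by (rule pr1_hom)
  have Sq0: "Smor L (pr0 L A0 A1) = pr0 L B0 B1" unfolding B0_def B1_def by (rule S_pr0)
  have Sq1: "Smor L (pr1 L A0 A1) = pr1 L B0 B1" unfolding B0_def B1_def by (rule S_pr1)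
  have hM: "comp L (Smor L v) u \<in> hom L D Z" using comp_hom[OF hu hSv] .
  have hN: "comp L (Smor L u') v' \<in> hom L D Z" using comp_hom[OF hv' hSu'] .
  have F1: "comp L (pr0 L B0 B1) (Smor L v) = pr0 L B0 A1"
  proof -
    have "comp L (pr0 L B0 B1) (Smor L v) = Smor L (comp L (pr0 L A0 A1) v)"
      unfolding Sq0[symmetric] by (rule S_comp[OF hv hq0, symmetric])
    also have "\<dots> = Smor L (pr0 L A0 X1)" using pv id_left[OF pr0_hom] by simp
    also have "\<dots> = pr0 L B0 A1" unfolding B0_def A1_def A0_def by (rule S_pr0)
    finally show ?thesis .
  qed
  have F2: "comp L (pr1 L B0 B1) (Smor L v) = comp L (Smor L i1) (pr1 L B0 A1)"
  proof -
    have "comp L (pr1 L B0 B1) (Smor L v) = Smor L (comp L (pr1 L A0 A1) v)"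
      unfolding Sq1[symmetric] by (rule S_comp[OF hv hq1, symmetric])
    also have "\<dots> = Smor L (comp L i1 (pr1 L A0 X1))" using pv by simp
    also have "\<dots> = comp L (Smor L i1) (Smor L (pr1 L A0 X1))" by (rule S_comp[OF pr1_hom hi1])
    also have "\<dots> = comp L (Smor L i1) (pr1 L B0 A1)" unfolding B0_def A1_def A0_def S_pr1 ..
    finally show ?thesis .
  qed
  have F5: "comp L (pr0 L B0 B1) (Smor L u') = comp L (Smor L i0) (pr0 L A0 B1)"
  proof -
    have "comp L (pr0 L B0 B1) (Smor L u') = Smor L (comp L (pr0 L A0 A1) u')"
      unfolding Sq0[symmetric] by (rule S_comp[OF hu' hq0, symmetric])
    also have "\<dots> = Smor L (comp L i0 (pr0 L X0 A1))" using pu' by simp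
    also have "\<dots> = comp L (Smor L i0) (Smor L (pr0 L X0 A1))" by (rule S_comp[OF pr0_hom hi0])
    also have "\<dots> = comp L (Smor L i0) (pr0 L A0 B1)" unfolding B1_def A1_def A0_def S_pr0 ..
    finally show ?thesis .
  qed
  have F6: "comp L (pr1 L B0 B1) (Smor L u') = pr1 L A0 B1"
  proof -
    have "comp L (pr1 L B0 B1) (Smor L u') = Smor L (comp L (pr1 L A0 A1) u')"
      unfolding Sq1[symmetric] by (rule S_comp[OF hu' hq1, symmetric])
    also have "\<dots> = Smor L (pr1 L X0 A1)" using pu' id_left[OF pr1_hom] by simp
    also have "\<dots> = pr1 L A0 B1" unfolding B1_def A1_def A0_def by (rule S_pr1)
    finally show ?thesis .
  qed
  have fp0: "comp L (pr0 L B0 B1) c = comp L (flip L X0) (pr0 L B0 B1)"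
    unfolding c_def P_def B0_def B1_def A0_def A1_def by (rule flip_pr0)
  have fp1: "comp L (pr1 L B0 B1) c = comp L (flip L X1) (pr1 L B0 B1)"
    unfolding c_def P_def B0_def B1_def A0_def A1_def by (rule flip_pr1)
  have hf0: "flip L X0 \<in> hom L B0 B0" using flip_prop unfolding B0_def A0_def by blast
  have hf1: "flip L X1 \<in> hom L B1 B1" using flip_prop unfolding B1_def A1_def by blast
  have fi0: "comp L (flip L X0) j0 = Smor L i0"
    unfolding j0_def i0_def A0_def by (rule flip_iota)
  have fi1: "comp L (flip L X1) (Smor L i1) = j1"
    unfolding j1_def i1_def A1_def by (rule flip_Siota)
  have "comp L c (comp L (Smor L v) u) = comp L (Smor L u') v'"
  proof (rule prod_ext[of _ D B0 B1])
    show "comp L c (comp L (Smor L v) u) \<in> hom L D (prd L B0 B1)"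
      using comp_hom[OF hM hc] unfolding Z_def .
    show "comp L (Smor L u') v' \<in> hom L D (prd L B0 B1)" using hN unfolding Z_def .
    have "comp L (pr0 L B0 B1) (comp L c (comp L (Smor L v) u))
        = comp L (comp L (pr0 L B0 B1) c) (comp L (Smor L v) u)"
      by (simp only: comp_assoc[OF hM hc hp0])
    also have "\<dots> = comp L (comp L (flip L X0) (pr0 L B0 B1)) (comp L (Smor L v) u)"
      by (simp only: fp0)
    also have "\<dots> = comp L (flip L X0) (comp L (pr0 L B0 B1) (comp L (Smor L v) u))"
      by (simp only: comp_assoc[OF hM hp0 hf0])
    also have "\<dots> = comp L (flip L X0) (comp L (comp L (pr0 L B0 B1) (Smor L v)) u)"
      by (simp only: comp_assoc[OF hu hSv hp0])
    also have "\<dots> = comp L (flip L X0) (comp L (pr0 L B0 A1) u)" by (simp only: F1)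
    also have "\<dots> = comp L (flip L X0) (comp L j0 (pr0 L A0 A1))" using pu by simp
    also have "\<dots> = comp L (comp L (flip L X0) j0) (pr0 L A0 A1)"
      by (simp only: comp_assoc[OF hq0 hj0 hf0])
    also have "\<dots> = comp L (Smor L i0) (pr0 L A0 A1)" by (simp only: fi0)
    also have "\<dots> = comp L (Smor L i0) (comp L (pr0 L A0 B1) v')"
      using pv' id_left[OF hq0] by simp
    also have "\<dots> = comp L (comp L (Smor L i0) (pr0 L A0 B1)) v'"
      by (simp only: comp_assoc[OF hv' pr0_hom hSi0])
    also have "\<dots> = comp L (comp L (pr0 L B0 B1) (Smor L u')) v'" by (simp only: F5)
    also have "\<dots> = comp L (pr0 L B0 B1) (comp L (Smor L u') v')"
      by (simp only: comp_assoc[OF hv' hSu' hp0])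
    finally show "comp L (pr0 L B0 B1) (comp L c (comp L (Smor L v) u))
        = comp L (pr0 L B0 B1) (comp L (Smor L u') v')" .
    have "comp L (pr1 L B0 B1) (comp L c (comp L (Smor L v) u))
        = comp L (comp L (pr1 L B0 B1) c) (comp L (Smor L v) u)"
      by (simp only: comp_assoc[OF hM hc hp1])
    also have "\<dots> = comp L (comp L (flip L X1) (pr1 L B0 B1)) (comp L (Smor L v) u)"
      by (simp only: fp1)
    also have "\<dots> = comp L (flip L X1) (comp L (pr1 L B0 B1) (comp L (Smor L v) u))"
      by (simp only: comp_assoc[OF hM hp1 hf1])
    also have "\<dots> = comp L (flip L X1) (comp L (comp L (pr1 L B0 B1) (Smor L v)) u)"
      by (simp only: comp_assoc[OF hu hSv hp1])
    also have "\<dots> = comp L (flip L X1) (comp L (comp L (Smor L i1) (pr1 L B0 A1)) u)"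
      by (simp only: F2)
    also have "\<dots> = comp L (flip L X1) (comp L (Smor L i1) (comp L (pr1 L B0 A1) u))"
      by (simp only: comp_assoc[OF hu pr1_hom hSi1])
    also have "\<dots> = comp L (flip L X1) (comp L (Smor L i1) (pr1 L A0 A1))"
      using pu id_left[OF hq1] by simp
    also have "\<dots> = comp L (comp L (flip L X1) (Smor L i1)) (pr1 L A0 A1)"
      by (simp only: comp_assoc[OF hq1 hSi1 hf1])
    also have "\<dots> = comp L j1 (pr1 L A0 A1)" by (simp only: fi1)
    also have "\<dots> = comp L (pr1 L A0 B1) v'" using pv' by simp
    also have "\<dots> = comp L (comp L (pr1 L B0 B1) (Smor L u')) v'" by (simp only: F6)
    also have "\<dots> = comp L (pr1 L B0 B1) (comp L (Smor L u') v')"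
      by (simp only: comp_assoc[OF hv' hSu' hp1])
    finally show "comp L (pr1 L B0 B1) (comp L c (comp L (Smor L v) u))
        = comp L (pr1 L B0 B1) (comp L (Smor L u') v')" .
  qed
  then show ?thesis unfolding c_def u_def v_def u'_def v'_def P_def A0_def A1_def .
qed

end
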